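(* Let $n\ge 2$. To each line of play of Planted Brussels Sprouts of order $n$ associate a sequence of transpositions $(t_1,\dots,t_{n-1})$ in the symmetric group $S_n$ as follows. Suppose the $k$-th move joins free arms with short labels $i$ and $j$. Let $i'$ and $j'$ be the short labels of the free arms immediately counterclockwise from the arm $i$ and from the arm $j$, respectively, within the region in which the move is made. Set $t_k=(i'\ j')$. Then the following hold: (1) $t_{n-1}t_{n-2}\cdots t_1=(1\,2\,\cdots\,n)$, where permutations are composed from right to left, so $t_1$ is applied first; (2) distinct lines of play give distinct sequences; (3) every sequence of $n-1$ transpositions $(t_1,\dots,t_{n-1})$ with $t_{n-1}\cdots t_1=(1\,2\,\cdots\,n)$ arises from some line of play. Hence these sequences are exactly the $n^{n-2}$ factorizations of the cycle $(1\,2\,\cdots\,n)$ into $n-1$ transpositions.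
   Context: Planted Brussels Sprouts of order $n$: start with a closed disk with $n$ marked points on its boundary circle, labeled $1,\dots,n$ in clockwise order. Attached to each marked point is an arm, a short segment pointing into the interior of the disk; these arms are free. A move consists of two steps. First, choose two free arms and join their free ends by a simple curve (an arc) in the disk that does not intersect any previously drawn arc or arm; the two joined arms cease to be free. Second, mark a point (a notch) on the arc, from which two new free arms emanate, one on each side of the arc. The game ends when no move is possible. A line of play is the full sequence of moves. Two lines of play are the same iff for each $k$ the arms joined at the $k$-th move coincide. Arms are identified by long labels: the original arm $i$ has long label $i$, and when arms with long labels $\alpha,\beta$ are joined, the new arms have long labels $(\alpha,\beta)$ and $(\beta,\alpha)$. Short labels: the original arm at point $i$ has short label $i$. If an arc joins arms with short labels $i$ and $j$, the two new arms receive short labels $i$ and $j$, placed so that, going clockwise around the notch, one sees the old arm $i$, the new arm $i$, the old arm $j$, and the new arm $j$. Regions and subgames: at any stage, the drawn arcs divide the disk into regions. The free arms in a region form a subgame, and any move joins two free arms of the same region. Within a region, the free arms carry distinct short labels and have a cyclic (clockwise) order around the region. "Immediately counterclockwise" refers to the preceding free arm in this cyclic order. For example, the first move joining original arms $i$ and $j$ yields $t_1=(i-1\ \ j-1)$, with indices taken mod $n$ in $\{1,\dots,n\}$. *)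

theory Defs
  imports "HOL-Combinatorics.Transposition"
begin

text \<open>Combinatorial model of Planted Brussels Sprouts.
  Long labels: the original arm i is Pt i; joining arms with long labels
  a and b creates arms Nw a b and Nw b a.\<close>

datatype larm = Pt nat | Nw larm larm

text \<open>A free arm is a pair (long label, short label).  A region is the list of its
  free arms in clockwise cyclic order (any rotation represents the same region).
  A state is the list of regions (their order is irrelevant).\<close>

type_synonym arm = "larm \<times> nat"
type_synonym region = "arm list"
type_synonym state = "region list"

text \<open>The region r, rotated so that the arm a = (al,i) comes first, reads
  a, S1, b, S2 clockwise, where b = (bl,j).  The arc from a to b splits it into the
  region S1 followed by the new arm with short label i (long label Nw al bl), and
  the region S2 followed by the new arm with short label j (long label Nw bl al).
  The arm immediately counterclockwise from a is the last element of b#S2, the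
  one immediately counterclockwise from b is the last element of a#S1; the
  associated transposition swaps their short labels.  The move is recorded as
  the unordered pair of long labels of the joined arms.\<close>

inductive bs_step :: "state \<Rightarrow> larm set \<Rightarrow> (nat \<Rightarrow> nat) \<Rightarrow> state \<Rightarrow> bool" where
  "bs_step (P @ r # Q) {al, bl}
     (transpose (snd (last ((bl, j) # S2))) (snd (last ((al, i) # S1))))
     (P @ (S1 @ [(Nw al bl, i)]) # (S2 @ [(Nw bl al, j)]) # Q)"
  if "rotate k r = (al, i) # S1 @ (bl, j) # S2"

inductive bs_plays :: "state \<Rightarrow> larm set list \<Rightarrow> (nat \<Rightarrow> nat) list \<Rightarrow> state \<Rightarrow> bool" where
  "bs_plays R [] [] R"
| "bs_step R m t R' \<Longrightarrow> bs_plays R' ms ts R'' \<Longrightarrow> bs_plays R (m # ms) (t # ts) R''"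

definition bs_init :: "nat \<Rightarrow> state" where
  "bs_init n = [map (\<lambda>i. (Pt i, i)) [1..<n+1]]"

definition bs_terminal :: "state \<Rightarrow> bool" where
  "bs_terminal R \<longleftrightarrow> (\<forall>r \<in> set R. length r \<le> 1)"

definition line_of_play :: "nat \<Rightarrow> larm set list \<Rightarrow> (nat \<Rightarrow> nat) list \<Rightarrow> bool" where
  "line_of_play n ms ts \<longleftrightarrow> (\<exists>R. bs_plays (bs_init n) ms ts R \<and> bs_terminal R)"

text \<open>Product t_m ... t_1 of ts = [t_1,...,t_m], t_1 applied first.\<close>
definition perm_prod :: "(nat \<Rightarrow> nat) list \<Rightarrow> nat \<Rightarrow> nat" where
  "perm_prod ts = fold (\<lambda>t acc. t \<circ> acc) ts id"

definition ncycle :: "nat \<Rightarrow> nat \<Rightarrow> nat" where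
  "ncycle n i = (if 1 \<le> i \<and> i < n then i + 1 else if i = n then 1 else i)"

definition is_transp_Sn :: "nat \<Rightarrow> (nat \<Rightarrow> nat) \<Rightarrow> bool" where
  "is_transp_Sn n t \<longleftrightarrow> (\<exists>a b. a \<in> {1..n} \<and> b \<in> {1..n} \<and> a \<noteq> b \<and> t = transpose a b)"

end

theory Submission
  imports Defs
begin

fun path_upd :: "nat list \<Rightarrow> (nat \<Rightarrow> nat) \<Rightarrow> nat \<Rightarrow> nat" where
  "path_upd [] f = f"
| "path_upd [x] f = f"
| "path_upd (x # y # r) f = (path_upd (y # r) f)(x := y)"

lemma path_upd_append:
  "xs \<noteq> [] \<Longrightarrow> ys \<noteq> [] \<Longrightarrow> path_upd (xs @ ys) f = path_upd xs ((path_upd ys f)(last xs := hd ys))"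
proof (induction xs rule: list_nonempty_induct)
  case (single x) then show ?case by (cases ys) auto
next
  case (cons x xs) then show ?case by (cases xs) auto
qed

lemma path_upd_out: "x \<notin> set (butlast xs) \<Longrightarrow> path_upd xs f x = f x"
  by (induction xs f rule: path_upd.induct) auto

lemma path_upd_upd: "z \<notin> set (butlast xs) \<Longrightarrow> path_upd xs (f(z:=v)) = (path_upd xs f)(z:=v)"
  by (induction xs f rule: path_upd.induct) (auto simp: fun_upd_twist)

lemma path_upd_in: "x \<in> set (butlast xs) \<Longrightarrow> path_upd xs f x = path_upd xs g x"
  by (induction xs f rule: path_upd.induct) auto

definition cycle_fun :: "nat list \<Rightarrow> (nat \<Rightarrow> nat) \<Rightarrow> nat \<Rightarrow> nat" where
  "cycle_fun c f = (if c = [] then f else (path_upd c f)(last c := hd c))"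

lemma cycle_fun_out: "x \<notin> set c \<Longrightarrow> cycle_fun c f x = f x"
proof -
  assume "x \<notin> set c"
  then have "x \<notin> set (butlast c)" by (auto dest: in_set_butlastD)
  then show ?thesis using \<open>x \<notin> set c\<close> unfolding cycle_fun_def by (auto simp: path_upd_out)
qed

lemma cycle_fun_in: "x \<in> set c \<Longrightarrow> cycle_fun c f x = cycle_fun c g x"
proof -
  assume x: "x \<in> set c"
  then have "c \<noteq> []" by auto
  then have "set c = set (butlast c) \<union> {last c}"
    by (metis append_butlast_last_id set_append set_simps Un_empty_right)
  with x show ?thesis unfolding cycle_fun_def by (auto intro: path_upd_in)
qed

lemma cycle_fun_rot1:
  assumes "distinct (a # xs)"
  shows "cycle_fun (xs @ [a]) f = cycle_fun (a # xs) f"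
proof (cases "xs = []")
  case True then show ?thesis by simp
next
  case False
  have lb: "last xs \<notin> set (butlast xs)" using assms False
    by (metis append_butlast_last_id distinct.simps(2) distinct_append not_distinct_conv_prefix)
  have al: "a \<noteq> last xs" using assms False by auto
  have "cycle_fun (xs @ [a]) f = (path_upd (xs @ [a]) f)(a := hd xs)"
    using False by (simp add: cycle_fun_def)
  also have "\<dots> = ((path_upd xs f)(last xs := a))(a := hd xs)"
    using False lb by (simp add: path_upd_append path_upd_upd)
  finally have 1: "cycle_fun (xs @ [a]) f = ((path_upd xs f)(last xs := a))(a := hd xs)" .
  have "cycle_fun (a # xs) f = (path_upd ([a] @ xs) f)(last xs := a)"
    using False by (simp add: cycle_fun_def)
  also have "\<dots> = ((path_upd xs f)(a := hd xs))(last xs := a)"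
    using False by (subst path_upd_append) auto
  finally show ?thesis using al 1 by (simp add: fun_upd_twist)
qed

lemma cycle_fun_rotate1: "distinct c \<Longrightarrow> cycle_fun (rotate1 c) f = cycle_fun c f"
  by (cases c) (auto simp: cycle_fun_rot1)

lemma cycle_fun_rotate: "distinct c \<Longrightarrow> cycle_fun (rotate k c) f = cycle_fun c f"
  by (induction k) (auto simp: cycle_fun_rotate1)

lemma comp_transpose: "f \<circ> transpose p q = f(p := f q, q := f p)"
  by (auto simp: fun_eq_iff transpose_def)

lemma cycle_fun_split:
  assumes "L1 \<noteq> []" "L2 \<noteq> []" "distinct (L1 @ L2)"
  shows "cycle_fun (L1 @ L2) f \<circ> transpose (last L2) (last L1) = cycle_fun L1 (cycle_fun L2 f)"
proof -
  define p where "p = last L2"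
  define q where "q = last L1"
  define G where "G = path_upd L2 f"
  have pL1: "p \<notin> set L1" using assms unfolding p_def by auto
  have qL2: "q \<notin> set L2" using assms last_in_set[of L1] unfolding q_def by (auto simp del: last_in_set)
  have pq: "p \<noteq> q" using pL1 assms unfolding q_def by auto
  have qb: "q \<notin> set (butlast L1)" using assms unfolding q_def
    by (metis append_butlast_last_id distinct_append not_distinct_conv_prefix)
  have pb: "p \<notin> set (butlast L1)" using pL1 by (auto dest: in_set_butlastD)
  define F where "F = cycle_fun (L1 @ L2) f"
  have F: "F = (path_upd L1 (G(q := hd L2)))(p := hd L1)"
    using assms unfolding F_def cycle_fun_def G_def p_def q_def by (simp add: path_upd_append)
  have Fq: "F q = hd L2" using F pq qb by (simp add: path_upd_out)
  have Fp: "F p = hd L1" using F by simp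
  have "F \<circ> transpose p q = F(p := hd L2, q := hd L1)"
    by (simp add: comp_transpose Fq Fp)
  also have "\<dots> = (path_upd L1 G)(p := hd L2, q := hd L1)"
    using F qb by (simp add: path_upd_upd fun_upd_twist pq)
  finally have 1: "F \<circ> transpose p q = (path_upd L1 G)(p := hd L2, q := hd L1)" .
  have "cycle_fun L1 (cycle_fun L2 f) = (path_upd L1 (G(p := hd L2)))(q := hd L1)"
    using assms unfolding cycle_fun_def G_def p_def q_def by simp
  also have "\<dots> = (path_upd L1 G)(p := hd L2, q := hd L1)"
    using pb by (simp add: path_upd_upd)
  finally show ?thesis using 1 unfolding F_def p_def q_def by simp
qed

lemma cycle_fun_comm:
  "set c \<inter> set d = {} \<Longrightarrow> cycle_fun c (cycle_fun d g) = cycle_fun d (cycle_fun c g)"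
proof (rule ext)
  fix x assume dis: "set c \<inter> set d = {}"
  show "cycle_fun c (cycle_fun d g) x = cycle_fun d (cycle_fun c g) x"
  proof (cases "x \<in> set c")
    case True
    then have "x \<notin> set d" using dis by auto
    then show ?thesis using True
      by (simp add: cycle_fun_out[of x d] cycle_fun_in[of x c "cycle_fun d g" g])
  next
    case False
    then show ?thesis
      by (cases "x \<in> set d") (simp_all add: cycle_fun_out cycle_fun_in[of x d "cycle_fun c g" g])
  qed
qed

lemma foldr_comm:
  "(\<forall>d\<in>set Q. set c \<inter> set d = {}) \<Longrightarrow>
   foldr cycle_fun Q (cycle_fun c g) = cycle_fun c (foldr cycle_fun Q g)"
  by (induction Q) (auto simp: cycle_fun_comm Int_commute)

lemma cycle_fun_transp:
  assumes "p \<notin> set c" "q \<notin> set c"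
  shows "cycle_fun c g \<circ> transpose p q = cycle_fun c (g \<circ> transpose p q)"
proof (rule ext)
  fix x
  show "(cycle_fun c g \<circ> transpose p q) x = cycle_fun c (g \<circ> transpose p q) x"
  proof (cases "x \<in> set c")
    case True
    then have "x \<noteq> p" "x \<noteq> q" using assms by auto
    then show ?thesis using True by (simp add: cycle_fun_in[of x c g "g \<circ> transpose p q"])
  next
    case False
    then have "transpose p q x \<notin> set c" using assms by (auto simp: transpose_def)
    then show ?thesis using False by (simp add: cycle_fun_out)
  qed
qed

lemma foldr_transp:
  "(\<forall>d\<in>set P. p \<notin> set d \<and> q \<notin> set d) \<Longrightarrow>
   foldr cycle_fun P g \<circ> transpose p q = foldr cycle_fun P (g \<circ> transpose p q)"
  by (induction P) (auto simp: cycle_fun_transp)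

definition cycs :: "nat list list \<Rightarrow> nat \<Rightarrow> nat" where
  "cycs C = foldr cycle_fun C id"

definition valid :: "nat list list \<Rightarrow> bool" where
  "valid C \<longleftrightarrow> distinct (concat C) \<and> [] \<notin> set C"

lemma cycs_out: "x \<notin> set (concat C) \<Longrightarrow> cycs C x = x"
  unfolding cycs_def by (induction C) (auto simp: cycle_fun_out)

lemma cycs_in: "distinct (concat C) \<Longrightarrow> c \<in> set C \<Longrightarrow> x \<in> set c \<Longrightarrow> cycs C x = cycle_fun c id x"
  unfolding cycs_def
proof (induction C)
  case (Cons d C)
  show ?case
  proof (cases "d = c")
    case True then show ?thesis using Cons cycle_fun_in[of x c "foldr cycle_fun C id" id] by (simp del: id_apply)
  next
    case False
    then have "c \<in> set C" using Cons by auto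
    then have "x \<notin> set d" using Cons.prems by auto
    then show ?thesis using Cons \<open>c \<in> set C\<close> by (simp add: cycle_fun_out)
  qed
qed simp

lemma rot_end: "x \<in> set r \<Longrightarrow> \<exists>k X. rotate k r = X @ [x]"
proof -
  assume "x \<in> set r"
  then obtain us vs where r: "r = us @ x # vs" by (meson split_list)
  have "rotate (length (us @ [x])) ((us @ [x]) @ vs) = vs @ us @ [x]"
    by (rule rotate_append)
  then have "rotate (length (us @ [x])) r = (vs @ us) @ [x]" using r by simp
  then show ?thesis by blast
qed

lemma rot_two: "x \<in> set r \<Longrightarrow> y \<in> set r \<Longrightarrow> x \<noteq> y \<Longrightarrow> \<exists>k X Y. rotate k r = X @ y # Y @ [x]"
proof -
  assume x: "x \<in> set r" and y: "y \<in> set r" and xy: "x \<noteq> y"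
  obtain k X where k: "rotate k r = X @ [x]" using rot_end[OF x] by blast
  have "y \<in> set (X @ [x])" using y k by (metis set_rotate)
  then have "y \<in> set X" using xy by auto
  then obtain A B where "X = A @ y # B" by (meson split_list)
  then show ?thesis using k by auto
qed

lemma cycs_append: "cycs (P @ c # Q) = foldr cycle_fun P (cycle_fun c (cycs Q))"
  unfolding cycs_def by simp

lemma split_C:
  assumes v: "valid C" and c: "c \<in> set C" and p: "p \<in> set c" and q: "q \<in> set c" and pq: "p \<noteq> q"
  shows "\<exists>C'. valid C' \<and> cycs C' = cycs C \<circ> transpose p q \<and> length C' = Suc (length C)
          \<and> set (concat C') = set (concat C) \<and> length (concat C') = length (concat C)"
proof -
  obtain P Q where C: "C = P @ c # Q" using c by (meson split_list)
  obtain k X Y where k: "rotate k c = X @ q # Y @ [p]" using rot_two[OF p q pq] by blast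
  define L1 where "L1 = X @ [q]"
  define L2 where "L2 = Y @ [p]"
  have L: "L1 @ L2 = rotate k c" using k unfolding L1_def L2_def by simp
  have dc: "distinct c" using v C unfolding valid_def by simp
  have dL: "distinct (L1 @ L2)" using L dc by simp
  have sL: "set L1 \<union> set L2 = set c" using L by (metis set_append set_rotate)
  have lL: "length L1 + length L2 = length c" using L by (metis length_append length_rotate)
  have PP: "\<forall>d\<in>set P. p \<notin> set d \<and> q \<notin> set d" using v C p q unfolding valid_def by auto
  define C' where "C' = P @ L1 # L2 # Q"
  have "cycs C' = foldr cycle_fun P (cycle_fun L1 (cycle_fun L2 (cycs Q)))"
    unfolding C'_def cycs_def by simp
  also have "\<dots> = foldr cycle_fun P (cycle_fun (L1 @ L2) (cycs Q) \<circ> transpose p q)"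
    using cycle_fun_split[of L1 L2 "cycs Q"] dL unfolding L1_def L2_def by simp
  also have "\<dots> = foldr cycle_fun P (cycle_fun c (cycs Q) \<circ> transpose p q)"
    using L cycle_fun_rotate[OF dc] by simp
  also have "\<dots> = cycs C \<circ> transpose p q"
    using foldr_transp[OF PP] C by (simp add: cycs_append)
  finally have 1: "cycs C' = cycs C \<circ> transpose p q" .
  have "valid C'" using v sL dL unfolding valid_def C'_def C L1_def L2_def by auto
  moreover have "set (concat C') = set (concat C)" using sL unfolding C'_def C by auto
  moreover have "length (concat C') = length (concat C)" using lL unfolding C'_def C by simp
  moreover have "length C' = Suc (length C)" unfolding C'_def C by simp
  ultimately show ?thesis using 1 by blast
qed

lemma merge_pos:
  assumes v: "valid C" and C: "C = P @ c1 # M @ c2 # Q" and x: "x \<in> set c1" and y: "y \<in> set c2"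
  shows "\<exists>C'. valid C' \<and> cycs C' = cycs C \<circ> transpose x y \<and> Suc (length C') = length C
          \<and> set (concat C') = set (concat C) \<and> length (concat C') = length (concat C)"
proof -
  obtain k1 X where k1: "rotate k1 c1 = X @ [x]" using rot_end[OF x] by blast
  obtain k2 Y where k2: "rotate k2 c2 = Y @ [y]" using rot_end[OF y] by blast
  define L1 where "L1 = X @ [x]"
  define L2 where "L2 = Y @ [y]"
  have d: "distinct c1" "distinct c2" using v C unfolding valid_def by auto
  have s: "set L1 = set c1" "set L2 = set c2" "distinct L1" "distinct L2"
    "length L1 = length c1" "length L2 = length c2"
    using k1 k2 d unfolding L1_def L2_def by (metis set_rotate distinct_rotate length_rotate)+
  have dis: "set c1 \<inter> set c2 = {}" using v C unfolding valid_def by auto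
  have xy: "x \<noteq> y" using dis x y by auto
  have dL: "distinct (L1 @ L2)" using s dis by simp
  have MM: "\<forall>d\<in>set M. set c2 \<inter> set d = {}" using v C unfolding valid_def by auto
  have PP: "\<forall>d\<in>set P. x \<notin> set d \<and> y \<notin> set d" using v C x y unfolding valid_def by auto
  define g where "g = foldr cycle_fun M (cycs Q)"
  have sp: "cycle_fun (L1 @ L2) g \<circ> transpose y x = cycle_fun L1 (cycle_fun L2 g)"
    using cycle_fun_split[of L1 L2 g] dL unfolding L1_def L2_def by simp
  have "cycle_fun (L1 @ L2) g = cycle_fun (L1 @ L2) g \<circ> transpose y x \<circ> transpose x y"
    by (simp add: comp_assoc transpose_commute)
  also have "\<dots> = cycle_fun c1 (cycle_fun c2 g) \<circ> transpose x y"
    using sp k1 k2 d cycle_fun_rotate unfolding L1_def L2_def by metis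
  finally have m: "cycle_fun (L1 @ L2) g = cycle_fun c1 (cycle_fun c2 g) \<circ> transpose x y" .
  define C' where "C' = P @ (L1 @ L2) # M @ Q"
  have "cycs C' = foldr cycle_fun P (cycle_fun (L1 @ L2) g)"
    unfolding C'_def cycs_def g_def by simp
  also have "\<dots> = foldr cycle_fun P (cycle_fun c1 (cycle_fun c2 g)) \<circ> transpose x y"
    using m foldr_transp[OF PP] by simp
  also have "\<dots> = cycs C \<circ> transpose x y"
    unfolding C cycs_def g_def using foldr_comm[OF MM] by simp
  finally have 1: "cycs C' = cycs C \<circ> transpose x y" .
  have "valid C'" using v s dL unfolding valid_def C'_def C by auto
  moreover have "set (concat C') = set (concat C)" using s unfolding C'_def C by auto
  moreover have "length (concat C') = length (concat C)" using s unfolding C'_def C by simp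
  moreover have "Suc (length C') = length C" unfolding C'_def C by simp
  ultimately show ?thesis using 1 by blast
qed

lemma merge_C:
  assumes v: "valid C" and c1: "c1 \<in> set C" and c2: "c2 \<in> set C" and p: "p \<in> set c1" and q: "q \<in> set c2"
    and nsame: "\<not> (\<exists>c\<in>set C. p \<in> set c \<and> q \<in> set c)"
  shows "\<exists>C'. valid C' \<and> cycs C' = cycs C \<circ> transpose p q \<and> Suc (length C') = length C
          \<and> set (concat C') = set (concat C) \<and> length (concat C') = length (concat C)"
proof -
  have ne: "c1 \<noteq> c2" using nsame c1 p q by auto
  obtain P Z where C: "C = P @ c1 # Z" using c1 by (meson split_list)
  show ?thesis
  proof (cases "c2 \<in> set Z")
    case True
    then obtain M Q where "Z = M @ c2 # Q" by (meson split_list)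
    then show ?thesis using merge_pos[OF v _ p q] C by auto
  next
    case False
    then have "c2 \<in> set P" using C c2 ne by auto
    then obtain P1 M where P: "P = P1 @ c2 # M" by (meson split_list)
    have "\<exists>C'. valid C' \<and> cycs C' = cycs C \<circ> transpose q p \<and> Suc (length C') = length C
          \<and> set (concat C') = set (concat C) \<and> length (concat C') = length (concat C)"
      using merge_pos[OF v _ q p] C P by auto
    then show ?thesis by (simp add: transpose_commute)
  qed
qed

lemma perm_prod_gen:
  fixes ts :: "(nat \<Rightarrow> nat) list" and g :: "nat \<Rightarrow> nat"
  shows "fold (\<lambda>t acc. t \<circ> acc) ts g = fold (\<lambda>t acc. t \<circ> acc) ts id \<circ> g"
proof (induction ts arbitrary: g)
  case (Cons t ts)
  have 1: "fold (\<lambda>t acc. t \<circ> acc) ts (t \<circ> g) = fold (\<lambda>t acc. t \<circ> acc) ts id \<circ> (t \<circ> g)"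
    by (rule Cons.IH[of "t \<circ> g"])
  have 2: "fold (\<lambda>t acc. t \<circ> acc) ts (t \<circ> id) = fold (\<lambda>t acc. t \<circ> acc) ts id \<circ> (t \<circ> id)"
    by (rule Cons.IH[of "t \<circ> id"])
  show ?case using 1 2 by (simp only: fold_simps comp_id comp_assoc)
qed simp

lemma perm_prod_Cons: "perm_prod (t # ts) = perm_prod ts \<circ> t"
  unfolding perm_prod_def using perm_prod_gen[of ts "t \<circ> id"] by (simp only: fold_simps comp_id)

lemma len_one_concat: "\<forall>c\<in>set C. length c = 1 \<Longrightarrow> length (concat C) = length C"
  by (induction C) auto

lemma cycs_id_len:
  assumes v: "valid C" and i: "cycs C = id"
  shows "length (concat C) = length C"
proof -
  have "\<forall>c\<in>set C. length c = 1"
  proof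
    fix c assume c: "c \<in> set C"
    have "c \<noteq> []" using v c unfolding valid_def by auto
    moreover have "\<not> length c \<ge> 2"
    proof
      assume "length c \<ge> 2"
      then obtain a b r where abr: "c = a # b # r" by (cases c; cases "tl c") auto
      have dc: "distinct c" using v c unfolding valid_def by (auto simp: distinct_concat_iff)
      then have "a \<noteq> last c" using abr by (metis distinct.simps(2) last.simps last_in_set list.discI)
      then have "cycle_fun c id a = b" using abr unfolding cycle_fun_def by simp
      moreover have "cycs C a = cycle_fun c id a"
        using cycs_in[of C c a] v c abr unfolding valid_def by simp
      moreover have "a \<noteq> b" using dc abr by simp
      ultimately show False using i by simp
    qed
    ultimately show "length c = 1" by (cases c) (auto simp: Suc_le_eq)
  qed
  then show ?thesis by (rule len_one_concat)
qed

lemma lower_bound: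
  "valid C \<Longrightarrow> cycs C = perm_prod ts \<Longrightarrow>
   (\<forall>t\<in>set ts. \<exists>p q. p \<noteq> q \<and> p \<in> set (concat C) \<and> q \<in> set (concat C) \<and> t = transpose p q) \<Longrightarrow>
   length (concat C) \<le> length C + length ts"
proof (induction ts arbitrary: C)
  case Nil
  then have "cycs C = id" by (simp add: perm_prod_def id_def)
  then show ?case using cycs_id_len[of C] Nil by (simp del: id_apply)
next
  case (Cons t ts)
  obtain p q where pq: "p \<noteq> q" "p \<in> set (concat C)" "q \<in> set (concat C)" and t: "t = transpose p q"
    using Cons.prems(3) by auto
  have e: "cycs C \<circ> t = perm_prod ts"
  proof -
    have "cycs C = perm_prod ts \<circ> t" using Cons.prems(2) perm_prod_Cons by metis
    then show ?thesis unfolding t by (metis comp_assoc comp_id transpose_comp_involutory)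
  qed
  obtain c1 c2 where c1: "c1 \<in> set C" "p \<in> set c1" and c2: "c2 \<in> set C" "q \<in> set c2" using pq by auto
  show ?case
  proof (cases "\<exists>c\<in>set C. p \<in> set c \<and> q \<in> set c")
    case True
    then obtain c where "c \<in> set C" "p \<in> set c" "q \<in> set c" by blast
    then obtain C' where C': "valid C'" "cycs C' = cycs C \<circ> transpose p q" "length C' = Suc (length C)"
      "set (concat C') = set (concat C)" "length (concat C') = length (concat C)"
      using split_C[OF Cons.prems(1)] pq by blast
    have h1: "cycs C' = perm_prod ts" using C'(2) e t by metis
    have h2': "\<forall>t\<in>set ts. \<exists>p q. p \<noteq> q \<and> p \<in> set (concat C) \<and> q \<in> set (concat C) \<and> t = transpose p q"
      using Cons.prems(3) by (simp del: set_concat)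
    have h2: "\<forall>t\<in>set ts. \<exists>p q. p \<noteq> q \<and> p \<in> set (concat C') \<and> q \<in> set (concat C') \<and> t = transpose p q"
      using h2' by (simp only: C'(4))
    have "length (concat C') \<le> length C' + length ts"
      using Cons.IH[OF C'(1) h1 h2] .
    then show ?thesis using C' by simp
  next
    case False
    then obtain C' where C': "valid C'" "cycs C' = cycs C \<circ> transpose p q" "Suc (length C') = length C"
      "set (concat C') = set (concat C)" "length (concat C') = length (concat C)"
      using merge_C[OF Cons.prems(1) c1(1) c2(1) c1(2) c2(2)] by blast
    have h1: "cycs C' = perm_prod ts" using C'(2) e t by metis
    have h2': "\<forall>t\<in>set ts. \<exists>p q. p \<noteq> q \<and> p \<in> set (concat C) \<and> q \<in> set (concat C) \<and> t = transpose p q"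
      using Cons.prems(3) by (simp del: set_concat)
    have h2: "\<forall>t\<in>set ts. \<exists>p q. p \<noteq> q \<and> p \<in> set (concat C') \<and> q \<in> set (concat C') \<and> t = transpose p q"
      using h2' by (simp only: C'(4))
    have "length (concat C') \<le> length C' + length ts"
      using Cons.IH[OF C'(1) h1 h2] .
    then show ?thesis using C' by simp
  qed
qed

definition cl :: "state \<Rightarrow> nat list list" where
  "cl R = map (map snd) R"

definition sig :: "state \<Rightarrow> nat \<Rightarrow> nat" where
  "sig R = cycs (cl R)"

lemma concat_cl: "concat (cl R) = map snd (concat R)"
  unfolding cl_def by (simp add: map_concat)

lemma step_props:
  assumes st: "bs_step R m t R'" and v: "valid (cl R)"
  obtains al i bl j p q where "t = transpose p q" "p \<noteq> q" "(al,i) \<in> set (concat R)" "(bl,j) \<in> set (concat R)"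
     "sig R p = i" "sig R q = j" "m = {al,bl}"
     "set (concat R') = set (concat R) - {(al,i),(bl,j)} \<union> {(Nw al bl,i),(Nw bl al,j)}"
     "sig R' = sig R \<circ> t" "valid (cl R')" "length R' = Suc (length R)"
     "set (concat (cl R')) = set (concat (cl R))"
proof -
  from st obtain P0 r Q0 k al i S1 bl j S2 where
    R: "R = P0 @ r # Q0" and rk: "rotate k r = (al,i) # S1 @ (bl,j) # S2" and m: "m = {al,bl}"
    and t: "t = transpose (snd (last ((bl,j)#S2))) (snd (last ((al,i)#S1)))"
    and R': "R' = P0 @ (S1 @ [(Nw al bl, i)]) # (S2 @ [(Nw bl al, j)]) # Q0"
    by (cases rule: bs_step.cases) blast
  define L1 where "L1 = map snd ((al,i)#S1)"
  define L2 where "L2 = map snd ((bl,j)#S2)"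
  define p where "p = last L2"
  define q where "q = last L1"
  have t': "t = transpose p q" unfolding t p_def q_def L1_def L2_def
    using last_map[of "(bl,j)#S2" snd] last_map[of "(al,i)#S1" snd] by (simp del: last.simps)
  have Lr: "L1 @ L2 = rotate k (map snd r)" unfolding L1_def L2_def
    by (simp add: rotate_map rk)
  have dd: "distinct (concat (cl P0) @ map snd r @ concat (cl Q0))" and ne: "[] \<notin> set (cl R)"
    using v unfolding valid_def R by (auto simp: cl_def)
  have sr: "set (map snd r) = set (L1 @ L2)" using Lr by simp
  have dL': "distinct (concat (cl P0) @ (L1 @ L2) @ concat (cl Q0))"
    using dd Lr by (simp del: set_concat)
  have dL: "distinct (L1 @ L2)" using dL' by (simp only: distinct_append) 
  have dr: "distinct (map snd r)" using dd by simp
  have L1ne: "L1 \<noteq> []" and L2ne: "L2 \<noteq> []" unfolding L1_def L2_def by auto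
  have pq: "p \<noteq> q" using dL L1ne L2ne unfolding p_def q_def
    by (metis disjoint_iff distinct_append last_in_set)
  have clR': "cl R' = cl P0 @ rotate1 L1 # rotate1 L2 # cl Q0"
    unfolding R' cl_def L1_def L2_def by simp
  have clR: "cl R = cl P0 @ map snd r # cl Q0" unfolding R cl_def by simp
  have PP: "\<forall>d\<in>set (cl P0). p \<notin> set d \<and> q \<notin> set d"
    using dL' L1ne L2ne unfolding p_def q_def by (auto simp del: last_in_set intro: last_in_set)
  have sigR': "sig R' = sig R \<circ> t"
  proof -
    have "sig R' = foldr cycle_fun (cl P0) (cycle_fun L1 (cycle_fun L2 (cycs (cl Q0))))"
      unfolding sig_def clR' cycs_def using dL by (simp add: cycle_fun_rotate1)
    also have "\<dots> = foldr cycle_fun (cl P0) (cycle_fun (L1 @ L2) (cycs (cl Q0)) \<circ> transpose p q)"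
      using cycle_fun_split[OF L1ne L2ne dL, of "cycs (cl Q0)"] unfolding p_def q_def by simp
    also have "\<dots> = foldr cycle_fun (cl P0) (cycle_fun (map snd r) (cycs (cl Q0)) \<circ> transpose p q)"
      using Lr cycle_fun_rotate[OF dr] by simp
    also have "\<dots> = sig R \<circ> transpose p q"
      using foldr_transp[OF PP] unfolding sig_def clR by (simp add: cycs_append)
    finally show ?thesis using t' by simp
  qed
  have pr: "p \<in> set (map snd r)" "q \<in> set (map snd r)" using sr L1ne L2ne unfolding p_def q_def by auto
  have dcl: "distinct (concat (cl R))" using v unfolding valid_def by simp
  have mr: "map snd r \<in> set (cl R)" unfolding clR by simp
  have cf: "cycle_fun (map snd r) id = cycle_fun (L1 @ L2) id" using Lr cycle_fun_rotate[OF dr] by simp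
  have sp: "sig R p = i"
  proof -
    have "sig R p = cycle_fun (L1 @ L2) id p" using cycs_in[OF dcl mr pr(1)] cf unfolding sig_def by simp
    also have "\<dots> = hd L1" unfolding cycle_fun_def p_def using L1ne L2ne by simp
    finally show ?thesis unfolding L1_def by simp
  qed
  have sq: "sig R q = j"
  proof -
    have qb: "q \<notin> set (butlast L1)" using dL L1ne unfolding q_def
      by (metis append_butlast_last_id distinct_append not_distinct_conv_prefix)
    have "sig R q = cycle_fun (L1 @ L2) id q" using cycs_in[OF dcl mr pr(2)] cf unfolding sig_def by simp
    also have "\<dots> = path_upd (L1 @ L2) id q" unfolding cycle_fun_def using L1ne L2ne pq
      by (simp add: p_def)
    also have "\<dots> = hd L2" using L1ne L2ne qb by (simp add: path_upd_append path_upd_out q_def)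
    finally show ?thesis unfolding L2_def by simp
  qed
  have sr2: "set r = insert (al,i) (insert (bl,j) (set S1 \<union> set S2))"
    using rk by (metis set_rotate set_append set_simps(2) Un_insert_right Un_insert_left Un_commute)
  have dsn: "distinct (map snd (concat P0) @ i # map snd S1 @ j # map snd S2 @ map snd (concat Q0))"
    using dL' unfolding L1_def L2_def by (simp add: cl_def map_concat)
  have arms: "(al,i) \<in> set (concat R)" "(bl,j) \<in> set (concat R)" unfolding R using sr2 by auto
  have setR': "set (concat R') = set (concat R) - {(al,i),(bl,j)} \<union> {(Nw al bl,i),(Nw bl al,j)}"
  proof -
    have n1: "(al,i) \<notin> set (concat P0) \<union> set S1 \<union> set S2 \<union> set (concat Q0)"
      using dsn by (force simp: image_iff)
    have n2: "(bl,j) \<notin> set (concat P0) \<union> set S1 \<union> set S2 \<union> set (concat Q0)"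
      using dsn by (force simp: image_iff)
    have ij: "(al,i) \<noteq> (bl,j)" using dsn by auto
    show ?thesis unfolding R R' using sr2 n1 n2 ij by auto
  qed
  have vR': "valid (cl R')"
  proof -
    have "set (rotate1 L1) = set L1" "set (rotate1 L2) = set L2" "[] \<noteq> rotate1 L1" "[] \<noteq> rotate1 L2"
      using L1ne L2ne by (simp_all, metis rotate1_is_Nil_conv)+
    then show ?thesis using dL' unfolding valid_def clR' using ne unfolding clR
      by (auto simp del: set_concat)
  qed
  have sR': "set (concat (cl R')) = set (concat (cl R))" unfolding clR' clR using sr by auto
  have lR': "length R' = Suc (length R)" unfolding R R' by simp
  show ?thesis by (rule that[OF t' pq arms(1) arms(2) sp sq m setR' sigR' vR' lR' sR'])
qed

lemma plays_props:
  "bs_plays R ms ts R'' \<Longrightarrow> valid (cl R) \<Longrightarrow>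
   valid (cl R'') \<and> set (concat (cl R'')) = set (concat (cl R)) \<and> length R'' = length R + length ts
   \<and> sig R = sig R'' \<circ> perm_prod ts"
proof (induction rule: bs_plays.induct)
  case (1 R)
  then show ?case by (simp add: perm_prod_def)
next
  case (2 R m t R' ms ts R'')
  obtain al i bl j p q where st0: "t = transpose p q" "p \<noteq> q" "(al,i) \<in> set (concat R)" "(bl,j) \<in> set (concat R)"
     "sig R p = i" "sig R q = j" "m = {al,bl}"
     "set (concat R') = set (concat R) - {(al,i),(bl,j)} \<union> {(Nw al bl,i),(Nw bl al,j)}"
     "sig R' = sig R \<circ> t" "valid (cl R')" "length R' = Suc (length R)"
     "set (concat (cl R')) = set (concat (cl R))"
    by (rule step_props[OF 2(1) 2(4)])
  have st: "valid (cl R')" "set (concat (cl R')) = set (concat (cl R))"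
    "length R' = Suc (length R)" "sig R' = sig R \<circ> t" "t = transpose p q"
    using st0 by auto
  have IH: "valid (cl R'')" "set (concat (cl R'')) = set (concat (cl R'))"
    "length R'' = length R' + length ts" "sig R' = sig R'' \<circ> perm_prod ts"
    using 2(3)[OF st(1)] by auto
  have "sig R = sig R' \<circ> t" using st(4,5) by (metis comp_assoc comp_id transpose_comp_involutory)
  then have "sig R = sig R'' \<circ> perm_prod (t # ts)" using IH(4) by (simp add: perm_prod_Cons comp_assoc)
  then show ?case using IH st by simp
qed

lemma cycs_singletons: "\<forall>c\<in>set C. length c = 1 \<Longrightarrow> cycs C = id"
proof (induction C)
  case Nil then show ?case by (simp add: cycs_def)
next
  case (Cons c C)
  then obtain x where "c = [x]" by (cases c) auto
  then show ?case using Cons by (simp add: cycs_def cycle_fun_def)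
qed

lemma terminal_props:
  assumes "valid (cl R)" "bs_terminal R"
  shows "sig R = id \<and> length (concat (cl R)) = length R"
proof -
  have "\<forall>c\<in>set (cl R). length c = 1"
    using assms unfolding valid_def bs_terminal_def cl_def
    by (auto simp: le_Suc_eq)
  then show ?thesis using cycs_singletons len_one_concat unfolding sig_def
    by (metis cl_def length_map)
qed

lemma path_upd_upt:
  assumes "a \<le> b"
  shows "path_upd [a..<Suc b] g = (\<lambda>x. if a \<le> x \<and> x < b then Suc x else g x)"
  using assms
proof (induction a rule: inc_induct)
  case base then show ?case by auto
next
  case (step m)
  have "[m..<Suc b] = m # Suc m # [Suc (Suc m)..<Suc b]" using step(2) by (simp add: upt_conv_Cons)
  moreover have "[Suc m..<Suc b] = Suc m # [Suc (Suc m)..<Suc b]" using step(2) by (simp add: upt_conv_Cons)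
  ultimately have "path_upd [m..<Suc b] g = (path_upd [Suc m..<Suc b] g)(m := Suc m)" by simp
  then show ?case using step(2,3) by (simp del: upt_Suc add: fun_eq_iff)
qed

lemma init_props:
  assumes "n \<ge> 1"
  shows "cl (bs_init n) = [[1..<n+1]]" "valid (cl (bs_init n))" "sig (bs_init n) = ncycle n"
    "set (concat (cl (bs_init n))) = {1..n}" "length (bs_init n) = 1"
proof -
  show c: "cl (bs_init n) = [[1..<n+1]]" unfolding cl_def bs_init_def by (simp add: comp_def)
  show "valid (cl (bs_init n))" unfolding c valid_def using assms by simp
  show "set (concat (cl (bs_init n))) = {1..n}" unfolding c by auto
  show "length (bs_init n) = 1" unfolding bs_init_def by simp
  have "sig (bs_init n) = cycle_fun [1..<Suc n] id" unfolding sig_def c cycs_def by simp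
  also have "\<dots> = (\<lambda>x. if 1 \<le> x \<and> x < n then Suc x else id x)(n := 1)"
  proof -
    have h: "[1..<Suc n] \<noteq> []" "last [1..<Suc n] = n" "hd [1..<Suc n] = 1" using assms by (simp_all del: upt_Suc)
    show ?thesis unfolding cycle_fun_def using h path_upd_upt[OF assms, of id] by (simp del: upt_Suc)
  qed
  also have "\<dots> = ncycle n" unfolding ncycle_def by (auto simp: fun_eq_iff)
  finally show "sig (bs_init n) = ncycle n" .
qed

lemma transp_eq:
  assumes "p \<noteq> q" "transpose p q = transpose p2 q2"
  shows "(p2 = p \<and> q2 = q) \<or> (p2 = q \<and> q2 = p)"
proof -
  have 1: "transpose p2 q2 p = q" using transpose_apply_first[of p q] unfolding assms(2) .
  have h1: "(if p = p2 then q2 else if p = q2 then p2 else p) = q" using 1 unfolding transpose_def .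
  show ?thesis using h1 assms(1) by (auto split: if_splits)
qed

lemma uniq_snd: "distinct (map snd xs) \<Longrightarrow> (a,x) \<in> set xs \<Longrightarrow> (b,x) \<in> set xs \<Longrightarrow> a = b"
proof -
  assume d: "distinct (map snd xs)" and a: "(a,x) \<in> set xs" and b: "(b,x) \<in> set xs"
  have "inj_on snd (set xs)" using d by (simp add: distinct_map)
  from inj_onD[OF this _ a b] have "(a,x) = (b,x)" by simp
  then show ?thesis by simp
qed

lemma det:
  "bs_plays R1 ms1 ts R1' \<Longrightarrow> bs_plays R2 ms2 ts R2' \<Longrightarrow> valid (cl R1) \<Longrightarrow> valid (cl R2) \<Longrightarrow>
   sig R1 = sig R2 \<Longrightarrow> set (concat R1) = set (concat R2) \<Longrightarrow> ms1 = ms2"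
proof (induction arbitrary: R2 ms2 R2' rule: bs_plays.induct)
  case (1 R)
  from "1.prems"(1) show ?case by (cases rule: bs_plays.cases) auto
next
  case (2 R m t R' ms ts R'')
  from 2(4) obtain m2 R2a ms2' where s2: "bs_step R2 m2 t R2a" "bs_plays R2a ms2' ts R2'" "ms2 = m2 # ms2'"
    by (cases rule: bs_plays.cases) auto
  obtain al i bl j p q where A: "t = transpose p q" "p \<noteq> q" "(al,i) \<in> set (concat R)" "(bl,j) \<in> set (concat R)"
     "sig R p = i" "sig R q = j" "m = {al,bl}"
     "set (concat R') = set (concat R) - {(al,i),(bl,j)} \<union> {(Nw al bl,i),(Nw bl al,j)}"
     "sig R' = sig R \<circ> t" "valid (cl R')" "length R' = Suc (length R)"
     "set (concat (cl R')) = set (concat (cl R))"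
    by (rule step_props[OF 2(1) 2(5)])
  obtain al2 i2 bl2 j2 p2 q2 where B: "t = transpose p2 q2" "p2 \<noteq> q2" "(al2,i2) \<in> set (concat R2)" "(bl2,j2) \<in> set (concat R2)"
     "sig R2 p2 = i2" "sig R2 q2 = j2" "m2 = {al2,bl2}"
     "set (concat R2a) = set (concat R2) - {(al2,i2),(bl2,j2)} \<union> {(Nw al2 bl2,i2),(Nw bl2 al2,j2)}"
     "sig R2a = sig R2 \<circ> t" "valid (cl R2a)" "length R2a = Suc (length R2)"
     "set (concat (cl R2a)) = set (concat (cl R2))"
    by (rule step_props[OF s2(1) 2(6)])
  have d: "distinct (map snd (concat R))" using 2(5) unfolding valid_def concat_cl by simp
  have pq: "(p2 = p \<and> q2 = q) \<or> (p2 = q \<and> q2 = p)" using transp_eq[OF A(2)] A(1) B(1) by simp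
  have eq: "m2 = m \<and> set (concat R2a) = set (concat R')"
  proof (cases "p2 = p \<and> q2 = q")
    case True
    then have "i2 = i" "j2 = j" using A(5,6) B(5,6) 2(7) by auto
    moreover have "(al2,i) \<in> set (concat R)" "(bl2,j) \<in> set (concat R)"
      using B(3,4) 2(8) \<open>i2 = i\<close> \<open>j2 = j\<close> by auto
    ultimately have "al2 = al" "bl2 = bl" using uniq_snd[OF d] A(3,4) by blast+
    then show ?thesis using A(7,8) B(7,8) 2(8) \<open>i2 = i\<close> \<open>j2 = j\<close> by simp
  next
    case False
    then have pq': "p2 = q" "q2 = p" using pq by auto
    then have "i2 = j" "j2 = i" using A(5,6) B(5,6) 2(7) by auto
    moreover have "(al2,j) \<in> set (concat R)" "(bl2,i) \<in> set (concat R)"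
      using B(3,4) 2(8) \<open>i2 = j\<close> \<open>j2 = i\<close> by auto
    ultimately have "al2 = bl" "bl2 = al" using uniq_snd[OF d] A(3,4) by blast+
    then show ?thesis using A(7,8) B(7,8) 2(8) \<open>i2 = j\<close> \<open>j2 = i\<close> by (simp add: insert_commute Un_commute)
  qed
  have "ms = ms2'" using 2(3)[OF s2(2) A(10) B(10)] A(9) B(9) 2(7) eq by simp
  then show ?case using eq s2(3) by simp
qed

lemma len_concat_ge: "[] \<notin> set C \<Longrightarrow> length C \<le> length (concat C)"
proof (induction C)
  case (Cons a C)
  then have "length a \<ge> 1" by (cases a) auto
  then show ?case using Cons by simp
qed simp

lemma len_concat_eq: "[] \<notin> set C \<Longrightarrow> length (concat C) = length C \<Longrightarrow> \<forall>c\<in>set C. length c = 1"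
proof (induction C)
  case (Cons c C)
  have "length C \<le> length (concat C)" using len_concat_ge[of C] Cons.prems(1) by simp
  moreover have "length c \<ge> 1" using Cons.prems(1) by (cases c) auto
  moreover have "length c + length (concat C) = Suc (length C)" using Cons.prems(2) by simp
  ultimately have "length c = 1" "length (concat C) = length C" by linarith+
  then show ?case using Cons by simp
qed simp

lemma exist:
  "valid (cl R) \<Longrightarrow> set (concat (cl R)) = {1..n} \<Longrightarrow> sig R = perm_prod ts \<Longrightarrow>
   length R + length ts = n \<Longrightarrow> (\<forall>t\<in>set ts. is_transp_Sn n t) \<Longrightarrow>
   \<exists>ms R''. bs_plays R ms ts R'' \<and> bs_terminal R''"
proof (induction ts arbitrary: R)
  case Nil
  have "length (concat (cl R)) = card {1..n}"
    using Nil.prems(1,2) distinct_card[of "concat (cl R)"] unfolding valid_def by simp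
  then have "length (concat (cl R)) = length (cl R)" using Nil.prems(4) by (simp add: cl_def)
  then have "\<forall>c\<in>set (cl R). length c = 1" using len_concat_eq Nil.prems(1) unfolding valid_def by blast
  then have "bs_terminal R" unfolding bs_terminal_def cl_def by auto
  then show ?case using bs_plays.intros(1) by blast
next
  case (Cons t ts)
  obtain a b where ab: "a \<in> {1..n}" "b \<in> {1..n}" "a \<noteq> b" "t = transpose a b"
    using Cons.prems(5) unfolding is_transp_Sn_def by auto
  have e: "sig R \<circ> t = perm_prod ts"
  proof -
    have "sig R = perm_prod ts \<circ> t" using Cons.prems(3) perm_prod_Cons by metis
    then show ?thesis unfolding ab(4) by (metis comp_assoc comp_id transpose_comp_involutory)
  qed
  have tsT: "\<forall>t\<in>set ts. \<exists>p q. p \<noteq> q \<and> p \<in> {1..n} \<and> q \<in> {1..n} \<and> t = transpose p q"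
  proof
    fix t' assume "t' \<in> set ts"
    then have "is_transp_Sn n t'" using Cons.prems(5) by simp
    then show "\<exists>p q. p \<noteq> q \<and> p \<in> {1..n} \<and> q \<in> {1..n} \<and> t' = transpose p q"
      unfolding is_transp_Sn_def by blast
  qed
  have same: "\<exists>c\<in>set (cl R). a \<in> set c \<and> b \<in> set c"
  proof (rule ccontr)
    assume ns: "\<not> (\<exists>c\<in>set (cl R). a \<in> set c \<and> b \<in> set c)"
    have ain: "a \<in> set (concat (cl R))" "b \<in> set (concat (cl R))" unfolding Cons.prems(2) by (rule ab(1), rule ab(2))
    obtain c1 where c1: "c1 \<in> set (cl R)" "a \<in> set c1" using ain(1) by auto
    obtain c2 where c2: "c2 \<in> set (cl R)" "b \<in> set c2" using ain(2) by auto
    obtain C' where C': "valid C'" "cycs C' = cycs (cl R) \<circ> transpose a b" "Suc (length C') = length (cl R)"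
      "set (concat C') = set (concat (cl R))" "length (concat C') = length (concat (cl R))"
      using merge_C[OF Cons.prems(1) c1(1) c2(1) c1(2) c2(2) ns] by blast
    have h1: "cycs C' = perm_prod ts" using C'(2) e ab(4) unfolding sig_def by metis
    have h2: "\<forall>t\<in>set ts. \<exists>p q. p \<noteq> q \<and> p \<in> set (concat C') \<and> q \<in> set (concat C') \<and> t = transpose p q"
      using tsT unfolding C'(4) Cons.prems(2) .
    have lb: "length (concat C') \<le> length C' + length ts" by (rule lower_bound[OF C'(1) h1 h2])
    have "length (concat (cl R)) = card {1..n}"
      using Cons.prems(1,2) distinct_card[of "concat (cl R)"] unfolding valid_def by simp
    then have "length (concat C') = n" using C'(5) by simp
    moreover have "length (cl R) = length R" by (simp add: cl_def)
    ultimately show False using lb C'(3) Cons.prems(4) by simp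
  qed
  then obtain r where r: "r \<in> set R" "a \<in> snd ` set r" "b \<in> snd ` set r" unfolding cl_def by auto
  obtain x where x: "x \<in> set r" "snd x = a" using r(2) by auto
  obtain y where y: "y \<in> set r" "snd y = b" using r(3) by auto
  have xy: "x \<noteq> y" using x y ab(3) by auto
  obtain k X Y where k: "rotate k r = X @ y # Y @ [x]" using rot_two[OF x(1) y(1) xy] by blast
  obtain al i S1 where a1: "X @ [y] = (al,i) # S1" by (cases "X @ [y]") auto
  obtain bl j S2 where b1: "Y @ [x] = (bl,j) # S2" by (cases "Y @ [x]") auto
  have rk: "rotate k r = (al,i) # S1 @ (bl,j) # S2" using k a1 b1
    by (metis append.assoc append_Cons append_Nil)
  have la: "last ((al,i) # S1) = y" using a1 by (metis last_snoc)
  have lb: "last ((bl,j) # S2) = x" using b1 by (metis last_snoc)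
  obtain P0 Q0 where R: "R = P0 @ r # Q0" using r(1) by (meson split_list)
  define R' where "R' = P0 @ (S1 @ [(Nw al bl, i)]) # (S2 @ [(Nw bl al, j)]) # Q0"
  have st0: "bs_step R {al,bl} (transpose (snd (last ((bl,j)#S2))) (snd (last ((al,i)#S1)))) R'"
    unfolding R R'_def by (rule bs_step.intros[OF rk])
  have st: "bs_step R {al,bl} t R'" using st0 unfolding la lb x(2) y(2) ab(4) .
  obtain al' i' bl' j' p q where S: "t = transpose p q" "p \<noteq> q" "(al',i') \<in> set (concat R)" "(bl',j') \<in> set (concat R)"
     "sig R p = i'" "sig R q = j'" "{al,bl} = {al',bl'}"
     "set (concat R') = set (concat R) - {(al',i'),(bl',j')} \<union> {(Nw al' bl',i'),(Nw bl' al',j')}"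
     "sig R' = sig R \<circ> t" "valid (cl R')" "length R' = Suc (length R)"
     "set (concat (cl R')) = set (concat (cl R))"
    by (rule step_props[OF st Cons.prems(1)])
  have "sig R' = perm_prod ts" using S(9) e by simp
  moreover have "length R' + length ts = n" using S(11) Cons.prems(4) by simp
  moreover have "\<forall>t\<in>set ts. is_transp_Sn n t" using Cons.prems(5) by simp
  ultimately obtain ms R'' where "bs_plays R' ms ts R''" "bs_terminal R''"
    using Cons.IH[OF S(10)] S(12) Cons.prems(2) by blast
  then show ?case using bs_plays.intros(2)[OF st] by blast
qed

theorem theorem5:
  fixes n :: nat
  assumes "n \<ge> 2"
  shows "(\<forall>ms ts. line_of_play n ms ts \<longrightarrow>
            length ts = n - 1 \<and> perm_prod ts = ncycle n)
       \<and> (\<forall>ms1 ms2 ts1 ts2. line_of_play n ms1 ts1 \<and> line_of_play n ms2 ts2 \<and> ms1 \<noteq> ms2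
            \<longrightarrow> ts1 \<noteq> ts2)
       \<and> (\<forall>ts. length ts = n - 1 \<and> (\<forall>t \<in> set ts. is_transp_Sn n t) \<and> perm_prod ts = ncycle n
            \<longrightarrow> (\<exists>ms. line_of_play n ms ts))"
proof -
  have n1: "n \<ge> 1" using assms by simp
  note I = init_props[OF n1]
  have P1: "length ts = n - 1 \<and> perm_prod ts = ncycle n" if lp: "line_of_play n ms ts" for ms ts
  proof -
    obtain R where pl: "bs_plays (bs_init n) ms ts R" and tm: "bs_terminal R"
      using lp unfolding line_of_play_def by blast
    have pp: "valid (cl R)" "set (concat (cl R)) = set (concat (cl (bs_init n)))"
      "length R = length (bs_init n) + length ts" "sig (bs_init n) = sig R \<circ> perm_prod ts"
      using plays_props[OF pl I(2)] by auto
    have tp: "sig R = id" "length (concat (cl R)) = length R" using terminal_props[OF pp(1) tm] by auto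
    have "length (concat (cl R)) = card {1..n}"
      using pp(1,2) I(4) distinct_card[of "concat (cl R)"] unfolding valid_def by simp
    then have "length ts = n - 1" using tp(2) pp(3) I(5) by simp
    moreover have "perm_prod ts = ncycle n" using pp(4) tp(1) I(3) by simp
    ultimately show ?thesis by simp
  qed
  have P2: "ts1 \<noteq> ts2" if lp: "line_of_play n ms1 ts1" "line_of_play n ms2 ts2" "ms1 \<noteq> ms2" for ms1 ms2 ts1 ts2
  proof
    assume eq: "ts1 = ts2"
    obtain R1 where pl1: "bs_plays (bs_init n) ms1 ts1 R1" using lp(1) unfolding line_of_play_def by blast
    obtain R2 where pl2: "bs_plays (bs_init n) ms2 ts1 R2" using lp(2) eq unfolding line_of_play_def by blast
    have "ms1 = ms2" by (rule det[OF pl1 pl2 I(2) I(2) refl refl])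
    then show False using lp(3) by simp
  qed
  have P3: "\<exists>ms. line_of_play n ms ts"
    if lp: "length ts = n - 1" "\<forall>t \<in> set ts. is_transp_Sn n t" "perm_prod ts = ncycle n" for ts
  proof -
    have "\<exists>ms R''. bs_plays (bs_init n) ms ts R'' \<and> bs_terminal R''"
      by (rule exist[OF I(2) I(4)]) (use lp n1 I(3,5) in auto)
    then show ?thesis unfolding line_of_play_def by blast
  qed
  show ?thesis using P1 P2 P3 by blast
qed

end
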